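(* Let $S=(N,M_0)$ be a non-trivial, strongly connected H1S-WMG$_\le$ system with incidence matrix $I$, such that deleting the shared place (if any) yields a strongly connected WMG$_\le$. Then $S$ is live if and only if there is no pair $(M,Y)$ with $M\in\mathbb{N}^P$, $Y\in\mathbb{N}^T$, $M=M_0+I\cdot Y$, such that $M$ enables no transition of $N$.
   Context: A Petri net is $N=(P,T,W)$ with finite disjoint sets $P$, $T$ and weights $W:(P\times T)\cup(T\times P)\to\mathbb{N}$; incidence matrix $I(p,t)=W(t,p)-W(p,t)$. Non-trivial means $P$ and $T$ are non-empty. Strongly connected means the bipartite directed graph with vertices $P\cup T$ and an arc $(x,y)$ whenever $W(x,y)>0$ is strongly connected. Transition $t$ is enabled at $M$ if $M(p)\ge W(p,t)$ for all $p$; firing yields $M+I[\cdot,t]$. A system is live if for every transition $t$ and every reachable marking $M'$ some marking reachable from $M'$ enables $t$. A place is shared if it has at least two output transitions; the net is homogeneous if for each place all its output weights are equal. An H1S-WMG$_\le$ is a homogeneous net with at most one shared place such that deleting the shared place (if any) and its adjacent arcs (keeping all transitions) yields a WMG$_\le$, i.e. a net in which every place has at most one input and at most one output transition. *)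

theory Defs
  imports Main
begin

text \<open>A Petri net N = (P, T, W): places of type 'p, transitions of type 't (so P and T are
disjoint by construction), finite sets P and T, and weights split into
Wpt (place to transition) and Wtp (transition to place), vanishing outside P x T.\<close>

definition petri_net :: "'p set \<Rightarrow> 't set \<Rightarrow> ('p \<Rightarrow> 't \<Rightarrow> nat) \<Rightarrow> ('t \<Rightarrow> 'p \<Rightarrow> nat) \<Rightarrow> bool" where
  "petri_net P T Wpt Wtp \<longleftrightarrow> finite P \<and> finite T \<and>
     (\<forall>p t. (p \<notin> P \<or> t \<notin> T) \<longrightarrow> Wpt p t = 0 \<and> Wtp t p = 0)"

definition nontrivial :: "'p set \<Rightarrow> 't set \<Rightarrow> bool" where
  "nontrivial P T \<longleftrightarrow> P \<noteq> {} \<and> T \<noteq> {}"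

definition incidence :: "('p \<Rightarrow> 't \<Rightarrow> nat) \<Rightarrow> ('t \<Rightarrow> 'p \<Rightarrow> nat) \<Rightarrow> 'p \<Rightarrow> 't \<Rightarrow> int" where
  "incidence Wpt Wtp p t = int (Wtp t p) - int (Wpt p t)"

definition net_arc :: "'p set \<Rightarrow> 't set \<Rightarrow> ('p \<Rightarrow> 't \<Rightarrow> nat) \<Rightarrow> ('t \<Rightarrow> 'p \<Rightarrow> nat) \<Rightarrow> ('p + 't) rel" where
  "net_arc P T Wpt Wtp =
     {(Inl p, Inr t) | p t. p \<in> P \<and> t \<in> T \<and> Wpt p t > 0} \<union>
     {(Inr t, Inl p) | p t. p \<in> P \<and> t \<in> T \<and> Wtp t p > 0}"

definition strongly_connected :: "'p set \<Rightarrow> 't set \<Rightarrow> ('p \<Rightarrow> 't \<Rightarrow> nat) \<Rightarrow> ('t \<Rightarrow> 'p \<Rightarrow> nat) \<Rightarrow> bool" where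
  "strongly_connected P T Wpt Wtp \<longleftrightarrow>
     (\<forall>x \<in> Inl ` P \<union> Inr ` T. \<forall>y \<in> Inl ` P \<union> Inr ` T. (x, y) \<in> (net_arc P T Wpt Wtp)\<^sup>*)"

definition out_trans :: "'t set \<Rightarrow> ('p \<Rightarrow> 't \<Rightarrow> nat) \<Rightarrow> 'p \<Rightarrow> 't set" where
  "out_trans T Wpt p = {t \<in> T. Wpt p t > 0}"

definition in_trans :: "'t set \<Rightarrow> ('t \<Rightarrow> 'p \<Rightarrow> nat) \<Rightarrow> 'p \<Rightarrow> 't set" where
  "in_trans T Wtp p = {t \<in> T. Wtp t p > 0}"

definition shared_place :: "'t set \<Rightarrow> ('p \<Rightarrow> 't \<Rightarrow> nat) \<Rightarrow> 'p \<Rightarrow> bool" where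
  "shared_place T Wpt p \<longleftrightarrow> card (out_trans T Wpt p) \<ge> 2"

definition homogeneous :: "'p set \<Rightarrow> 't set \<Rightarrow> ('p \<Rightarrow> 't \<Rightarrow> nat) \<Rightarrow> bool" where
  "homogeneous P T Wpt \<longleftrightarrow>
     (\<forall>p \<in> P. \<forall>t1 \<in> out_trans T Wpt p. \<forall>t2 \<in> out_trans T Wpt p. Wpt p t1 = Wpt p t2)"

definition wmg_le :: "'p set \<Rightarrow> 't set \<Rightarrow> ('p \<Rightarrow> 't \<Rightarrow> nat) \<Rightarrow> ('t \<Rightarrow> 'p \<Rightarrow> nat) \<Rightarrow> bool" where
  "wmg_le P T Wpt Wtp \<longleftrightarrow>
     (\<forall>p \<in> P. card (in_trans T Wtp p) \<le> 1 \<and> card (out_trans T Wpt p) \<le> 1)"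

definition del_Wpt :: "'p set \<Rightarrow> ('p \<Rightarrow> 't \<Rightarrow> nat) \<Rightarrow> 'p \<Rightarrow> 't \<Rightarrow> nat" where
  "del_Wpt Q Wpt p t = (if p \<in> Q then 0 else Wpt p t)"

definition del_Wtp :: "'p set \<Rightarrow> ('t \<Rightarrow> 'p \<Rightarrow> nat) \<Rightarrow> 't \<Rightarrow> 'p \<Rightarrow> nat" where
  "del_Wtp Q Wtp t p = (if p \<in> Q then 0 else Wtp t p)"

definition shared_places :: "'p set \<Rightarrow> 't set \<Rightarrow> ('p \<Rightarrow> 't \<Rightarrow> nat) \<Rightarrow> 'p set" where
  "shared_places P T Wpt = {p \<in> P. shared_place T Wpt p}"

definition H1S_WMG_le :: "'p set \<Rightarrow> 't set \<Rightarrow> ('p \<Rightarrow> 't \<Rightarrow> nat) \<Rightarrow> ('t \<Rightarrow> 'p \<Rightarrow> nat) \<Rightarrow> bool" where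
  "H1S_WMG_le P T Wpt Wtp \<longleftrightarrow>
     homogeneous P T Wpt \<and>
     card (shared_places P T Wpt) \<le> 1 \<and>
     (let Q = shared_places P T Wpt in
        wmg_le (P - Q) T (del_Wpt Q Wpt) (del_Wtp Q Wtp))"

text \<open>Firing semantics. Markings are functions 'p \<Rightarrow> nat (only values on P matter).\<close>
definition enabled :: "'p set \<Rightarrow> ('p \<Rightarrow> 't \<Rightarrow> nat) \<Rightarrow> ('p \<Rightarrow> nat) \<Rightarrow> 't \<Rightarrow> bool" where
  "enabled P Wpt M t \<longleftrightarrow> (\<forall>p \<in> P. M p \<ge> Wpt p t)"

definition fire :: "('p \<Rightarrow> 't \<Rightarrow> nat) \<Rightarrow> ('t \<Rightarrow> 'p \<Rightarrow> nat) \<Rightarrow> ('p \<Rightarrow> nat) \<Rightarrow> 't \<Rightarrow> 'p \<Rightarrow> nat" where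
  "fire Wpt Wtp M t = (\<lambda>p. M p - Wpt p t + Wtp t p)"

inductive reachable :: "'p set \<Rightarrow> 't set \<Rightarrow> ('p \<Rightarrow> 't \<Rightarrow> nat) \<Rightarrow> ('t \<Rightarrow> 'p \<Rightarrow> nat)
    \<Rightarrow> ('p \<Rightarrow> nat) \<Rightarrow> ('p \<Rightarrow> nat) \<Rightarrow> bool"
  for P T Wpt Wtp where
  refl: "reachable P T Wpt Wtp M M"
| step: "reachable P T Wpt Wtp M M' \<Longrightarrow> t \<in> T \<Longrightarrow> enabled P Wpt M' t \<Longrightarrow>
         reachable P T Wpt Wtp M (fire Wpt Wtp M' t)"

definition live :: "'p set \<Rightarrow> 't set \<Rightarrow> ('p \<Rightarrow> 't \<Rightarrow> nat) \<Rightarrow> ('t \<Rightarrow> 'p \<Rightarrow> nat) \<Rightarrow> ('p \<Rightarrow> nat) \<Rightarrow> bool" where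
  "live P T Wpt Wtp M0 \<longleftrightarrow>
     (\<forall>t \<in> T. \<forall>M'. reachable P T Wpt Wtp M0 M' \<longrightarrow>
        (\<exists>M''. reachable P T Wpt Wtp M' M'' \<and> enabled P Wpt M'' t))"

end

theory Submission
  imports Defs
begin

inductive rc :: "'p set \<Rightarrow> 't set \<Rightarrow> ('p \<Rightarrow> 't \<Rightarrow> nat) \<Rightarrow> ('t \<Rightarrow> 'p \<Rightarrow> nat)
    \<Rightarrow> ('p \<Rightarrow> nat) \<Rightarrow> ('p \<Rightarrow> nat) \<Rightarrow> ('t \<Rightarrow> nat) \<Rightarrow> bool"
  for P T Wpt Wtp where
  rc0: "rc P T Wpt Wtp M M (\<lambda>_. 0)"
| rcS: "rc P T Wpt Wtp M M' X \<Longrightarrow> t \<in> T \<Longrightarrow> enabled P Wpt M' t \<Longrightarrow>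
         rc P T Wpt Wtp M (fire Wpt Wtp M' t) (X(t := Suc (X t)))"

lemma rc_reach: "rc P T Wpt Wtp M M' X \<Longrightarrow> reachable P T Wpt Wtp M M'"
  by (induction rule: rc.induct) (auto intro: reachable.intros)

lemma reach_rc: "reachable P T Wpt Wtp M M' \<Longrightarrow> \<exists>X. rc P T Wpt Wtp M M' X"
  by (induction rule: reachable.induct) (auto intro: rc.intros)

lemma rc_supp: "rc P T Wpt Wtp M M' X \<Longrightarrow> t \<notin> T \<Longrightarrow> X t = 0"
  by (induction rule: rc.induct) auto

lemma sum_upd_Suc:
  fixes f :: "'t \<Rightarrow> int"
  assumes "finite T" "t \<in> T"
  shows "(\<Sum>s\<in>T. f s * int ((X(t := Suc (X t))) s)) = (\<Sum>s\<in>T. f s * int (X s)) + f t"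
proof -
  have "(\<Sum>s\<in>T. f s * int ((X(t := Suc (X t))) s)) = f t * int (Suc (X t)) + (\<Sum>s\<in>T-{t}. f s * int ((X(t := Suc (X t))) s))"
    using assms by (simp add: sum.remove)
  also have "(\<Sum>s\<in>T-{t}. f s * int ((X(t := Suc (X t))) s)) = (\<Sum>s\<in>T-{t}. f s * int (X s))"
    by (rule sum.cong) auto
  also have "(\<Sum>s\<in>T. f s * int (X s)) = f t * int (X t) + (\<Sum>s\<in>T-{t}. f s * int (X s))"
    using assms by (simp add: sum.remove)
  ultimately show ?thesis by (simp add: algebra_simps)
qed

lemma rc_eq:
  assumes "rc P T Wpt Wtp M M' X" "finite T" "p \<in> P"
  shows "int (M' p) = int (M p) + (\<Sum>t\<in>T. incidence Wpt Wtp p t * int (X t))"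
  using assms(1)
proof (induction rule: rc.induct)
  case (rc0 M)
  then show ?case by simp
next
  case (rcS M M' X t)
  have "Wpt p t \<le> M' p" using rcS.hyps(3) assms(3) by (simp add: enabled_def)
  then have "int (fire Wpt Wtp M' t p) = int (M' p) + incidence Wpt Wtp p t"
    by (simp add: fire_def incidence_def of_nat_diff)
  then show ?case using rcS.IH sum_upd_Suc[OF assms(2) rcS.hyps(2)] by simp
qed

lemma reach_deadlock:
  assumes "reachable P T Wpt Wtp M M'" "\<forall>t\<in>T. \<not> enabled P Wpt M t"
  shows "M' = M"
  using assms by (induction rule: reachable.induct) auto

lemma dead_lemma:
  assumes S: "S \<subseteq> T"
    and blk: "\<And>u. u \<in> S \<Longrightarrow> \<beta> u \<in> P \<and> M1 (\<beta> u) < Wpt (\<beta> u) u"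
    and inp: "\<And>u v. u \<in> S \<Longrightarrow> v \<in> T \<Longrightarrow> Wtp v (\<beta> u) > 0 \<Longrightarrow> v \<in> S"
    and r: "reachable P T Wpt Wtp Ma M2" and e: "Ma = M1"
  shows "\<forall>u\<in>S. M2 (\<beta> u) \<le> M1 (\<beta> u)"
  using r e
proof (induction rule: reachable.induct)
  case refl
  then show ?case by simp
next
  case (step M M' v)
  have "v \<notin> S"
  proof
    assume "v \<in> S"
    then have "M' (\<beta> v) < Wpt (\<beta> v) v" using step.IH step.prems blk[of v] by fastforce
    then show False using step.hyps(3) blk[of v] \<open>v \<in> S\<close> by (auto simp: enabled_def)
  qed
  show ?case
  proof
    fix u assume u: "u \<in> S"
    have "Wtp v (\<beta> u) = 0" using inp[OF u step.hyps(2)] \<open>v \<notin> S\<close> by auto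
    then show "fire Wpt Wtp M' v (\<beta> u) \<le> M1 (\<beta> u)"
      using step.IH step.prems u by (force simp: fire_def)
  qed
qed

lemma dead_not_live:
  assumes S: "S \<subseteq> T" "u0 \<in> S"
    and blk: "\<And>u. u \<in> S \<Longrightarrow> \<beta> u \<in> P \<and> M1 (\<beta> u) < Wpt (\<beta> u) u"
    and inp: "\<And>u v. u \<in> S \<Longrightarrow> v \<in> T \<Longrightarrow> Wtp v (\<beta> u) > 0 \<Longrightarrow> v \<in> S"
    and r: "reachable P T Wpt Wtp M0 M1"
  shows "\<not> live P T Wpt Wtp M0"
proof
  assume "live P T Wpt Wtp M0"
  then obtain M2 where m2: "reachable P T Wpt Wtp M1 M2" "enabled P Wpt M2 u0"
    using r S unfolding live_def by blast
  have "\<forall>u\<in>S. M2 (\<beta> u) \<le> M1 (\<beta> u)"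
    by (rule dead_lemma[where T=T and P=P and Wpt=Wpt and Wtp=Wtp and Ma=M1]) (use S blk inp m2 in auto)
  then have "M2 (\<beta> u0) \<le> M1 (\<beta> u0)" using S(2) by blast
  then show False using m2(2) blk[OF S(2)] by (auto simp: enabled_def)
qed


lemma rc_dead_zero:
  assumes "rc P T Wpt Wtp Ma M'' Z" "Ma = M'"
    and dead: "\<forall>M''. reachable P T Wpt Wtp M' M'' \<longrightarrow> \<not> enabled P Wpt M'' t"
  shows "Z t = 0"
  using assms(1,2)
proof (induction rule: rc.induct)
  case (rc0 M)
  then show ?case by simp
next
  case (rcS M M1 X u)
  have "u \<noteq> t" using dead rc_reach[OF rcS.hyps(1)] rcS.prems rcS.hyps(3) by blast
  then show ?case using rcS by simp
qed

lemma sum_single: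
  fixes f :: "'t \<Rightarrow> 'a::comm_monoid_add"
  assumes "finite T" "u \<in> T" "\<And>v. v \<in> T \<Longrightarrow> v \<noteq> u \<Longrightarrow> f v = 0"
  shows "(\<Sum>v\<in>T. f v) = f u"
proof -
  have "(\<Sum>v\<in>T. f v) = f u + (\<Sum>v\<in>T-{u}. f v)" using assms by (simp add: sum.remove)
  also have "(\<Sum>v\<in>T-{u}. f v) = 0" using assms by (intro sum.neutral) auto
  finally show ?thesis by simp
qed

lemma bound_lemma:
  assumes fin: "finite T" and t: "t \<in> T"
    and path: "(Inr t, x) \<in> (net_arc (P - Q) T (del_Wpt Q Wpt) (del_Wtp Q Wtp))\<^sup>*"
    and inp: "\<And>p v v'. p \<in> P - Q \<Longrightarrow> v \<in> T \<Longrightarrow> v' \<in> T \<Longrightarrow> Wtp v p > 0 \<Longrightarrow> Wtp v' p > 0 \<Longrightarrow> v = v'"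
    and dead: "\<forall>M''. reachable P T Wpt Wtp M' M'' \<longrightarrow> \<not> enabled P Wpt M'' t"
  shows "case x of Inr u \<Rightarrow> (\<exists>K. \<forall>M'' Z. rc P T Wpt Wtp M' M'' Z \<longrightarrow> Z u \<le> K)
           | Inl p \<Rightarrow> (\<exists>K. \<forall>M'' Z. rc P T Wpt Wtp M' M'' Z \<longrightarrow> (\<Sum>v\<in>T. Wtp v p * Z v) \<le> K)"
  using path
proof (induction rule: rtrancl_induct)
  case base
  then show ?case using rc_dead_zero[OF _ HOL.refl dead] by (auto intro!: exI[of _ 0])
next
  case (step y z)
  from step.hyps(2) consider
      (pt) p u where "y = Inl p" "z = Inr u" "p \<in> P - Q" "u \<in> T" "Wpt p u > 0"
    | (tp) p v where "y = Inr v" "z = Inl p" "p \<in> P - Q" "v \<in> T" "Wtp v p > 0"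
    unfolding net_arc_def del_Wpt_def del_Wtp_def by (auto split: if_splits)
  then show ?case
  proof cases
    case pt
    then obtain K where K: "\<And>M'' Z. rc P T Wpt Wtp M' M'' Z \<Longrightarrow> (\<Sum>v\<in>T. Wtp v p * Z v) \<le> K"
      using step.IH by auto
    have "\<forall>M'' Z. rc P T Wpt Wtp M' M'' Z \<longrightarrow> Z u \<le> M' p + K"
    proof (intro allI impI)
      fix M'' Z assume r: "rc P T Wpt Wtp M' M'' Z"
      have eq: "int (M'' p) = int (M' p) + (\<Sum>v\<in>T. incidence Wpt Wtp p v * int (Z v))"
        using rc_eq[OF r fin] pt by auto
      have "(\<Sum>v\<in>T. incidence Wpt Wtp p v * int (Z v)) =
            int (\<Sum>v\<in>T. Wtp v p * Z v) - int (\<Sum>v\<in>T. Wpt p v * Z v)"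
        by (simp add: incidence_def sum_subtractf algebra_simps)
      then have "(\<Sum>v\<in>T. Wpt p v * Z v) \<le> M' p + (\<Sum>v\<in>T. Wtp v p * Z v)"
        using eq by linarith
      moreover have "Wpt p u * Z u \<le> (\<Sum>v\<in>T. Wpt p v * Z v)"
        using member_le_sum[of u T "\<lambda>v. Wpt p v * Z v"] pt fin by auto
      moreover have "Z u \<le> Wpt p u * Z u" using pt by simp
      ultimately show "Z u \<le> M' p + K" using K[OF r] by linarith
    qed
    then show ?thesis using pt by auto
  next
    case tp
    then obtain K where K: "\<And>M'' Z. rc P T Wpt Wtp M' M'' Z \<Longrightarrow> Z v \<le> K"
      using step.IH by auto
    have "\<forall>M'' Z. rc P T Wpt Wtp M' M'' Z \<longrightarrow> (\<Sum>v'\<in>T. Wtp v' p * Z v') \<le> Wtp v p * K"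
    proof (intro allI impI)
      fix M'' Z assume r: "rc P T Wpt Wtp M' M'' Z"
      have "(\<Sum>v'\<in>T. Wtp v' p * Z v') = Wtp v p * Z v"
        by (rule sum_single[OF fin tp(4)]) (use inp tp in fastforce)
      then show "(\<Sum>v'\<in>T. Wtp v' p * Z v') \<le> Wtp v p * K" using K[OF r] by simp
    qed
    then show ?thesis using tp by auto
  qed
qed


lemma sum_upd_Suc_nat:
  assumes "finite T" "t \<in> T"
  shows "(\<Sum>s\<in>T. (X(t := Suc (X t))) s) = (\<Sum>s\<in>T. X s) + 1"
proof -
  have "(\<Sum>s\<in>T. (X(t := Suc (X t))) s) = Suc (X t) + (\<Sum>s\<in>T-{t}. (X(t := Suc (X t))) s)"
    using assms by (simp add: sum.remove)
  also have "(\<Sum>s\<in>T-{t}. (X(t := Suc (X t))) s) = (\<Sum>s\<in>T-{t}. X s)"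
    by (rule sum.cong) auto
  also have "(\<Sum>s\<in>T. X s) = X t + (\<Sum>s\<in>T-{t}. X s)"
    using assms by (simp add: sum.remove)
  ultimately show ?thesis by simp
qed

lemma inc_split:
  "(\<Sum>v\<in>T. incidence Wpt Wtp p v * int (Z v)) =
            int (\<Sum>v\<in>T. Wtp v p * Z v) - int (\<Sum>v\<in>T. Wpt p v * Z v)"
  by (simp add: incidence_def sum_subtractf algebra_simps)

theorem mainTheorem7:
  fixes P :: "'p set" and T :: "'t set"
    and Wpt :: "'p \<Rightarrow> 't \<Rightarrow> nat" and Wtp :: "'t \<Rightarrow> 'p \<Rightarrow> nat"
    and M0 :: "'p \<Rightarrow> nat"
  assumes net: "petri_net P T Wpt Wtp"
    and nt: "nontrivial P T"
    and sc: "strongly_connected P T Wpt Wtp"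
    and h1s: "H1S_WMG_le P T Wpt Wtp"
    and sc_del: "strongly_connected (P - shared_places P T Wpt) T
                   (del_Wpt (shared_places P T Wpt) Wpt) (del_Wtp (shared_places P T Wpt) Wtp)"
  shows "live P T Wpt Wtp M0 \<longleftrightarrow>
    \<not> (\<exists>M :: 'p \<Rightarrow> nat. \<exists>Y :: 't \<Rightarrow> nat.
          (\<forall>p \<in> P. int (M p) = int (M0 p) + (\<Sum>t \<in> T. incidence Wpt Wtp p t * int (Y t))) \<and>
          (\<forall>t \<in> T. \<not> enabled P Wpt M t))"
proof -
  define Q where "Q = shared_places P T Wpt"
  have finP: "finite P" and finT: "finite T" using net by (auto simp: petri_net_def)
  have QP: "Q \<subseteq> P" by (auto simp: Q_def shared_places_def)
  have finQ: "finite Q" using QP finP finite_subset by blast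
  have hom: "homogeneous P T Wpt" and cQ: "card Q \<le> 1"
    and wmg: "wmg_le (P - Q) T (del_Wpt Q Wpt) (del_Wtp Q Wtp)"
    using h1s by (auto simp: H1S_WMG_le_def Q_def Let_def)
  have Quniq: "\<And>p p'. p \<in> Q \<Longrightarrow> p' \<in> Q \<Longrightarrow> p = p'"
    using cQ finQ card_le_Suc0_iff_eq[OF finQ] by auto
  have inp: "\<And>p v v'. p \<in> P - Q \<Longrightarrow> v \<in> T \<Longrightarrow> v' \<in> T \<Longrightarrow> Wtp v p > 0 \<Longrightarrow> Wtp v' p > 0 \<Longrightarrow> v = v'"
  proof -
    fix p v v' assume a: "p \<in> P - Q" "v \<in> T" "v' \<in> T" "Wtp v p > 0" "Wtp v' p > 0"
    have "card (in_trans T (del_Wtp Q Wtp) p) \<le> Suc 0" using wmg a(1) by (auto simp: wmg_le_def)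
    moreover have "finite (in_trans T (del_Wtp Q Wtp) p)" using finT by (simp add: in_trans_def)
    moreover have "v \<in> in_trans T (del_Wtp Q Wtp) p" "v' \<in> in_trans T (del_Wtp Q Wtp) p"
      using a by (auto simp: in_trans_def del_Wtp_def)
    ultimately show "v = v'" using card_le_Suc0_iff_eq by blast
  qed
  have outp: "\<And>p v v'. p \<in> P - Q \<Longrightarrow> v \<in> T \<Longrightarrow> v' \<in> T \<Longrightarrow> Wpt p v > 0 \<Longrightarrow> Wpt p v' > 0 \<Longrightarrow> v = v'"
  proof -
    fix p v v' assume a: "p \<in> P - Q" "v \<in> T" "v' \<in> T" "Wpt p v > 0" "Wpt p v' > 0"
    have "card (out_trans T (del_Wpt Q Wpt) p) \<le> Suc 0" using wmg a(1) by (auto simp: wmg_le_def)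
    moreover have "finite (out_trans T (del_Wpt Q Wpt) p)" using finT by (simp add: out_trans_def)
    moreover have "v \<in> out_trans T (del_Wpt Q Wpt) p" "v' \<in> out_trans T (del_Wpt Q Wpt) p"
      using a by (auto simp: out_trans_def del_Wpt_def)
    ultimately show "v = v'" using card_le_Suc0_iff_eq by blast
  qed
  show ?thesis
  proof
    assume live: "live P T Wpt Wtp M0"
    show "\<not> (\<exists>M Y. (\<forall>p \<in> P. int (M p) = int (M0 p) + (\<Sum>t \<in> T. incidence Wpt Wtp p t * int (Y t))) \<and>
          (\<forall>t \<in> T. \<not> enabled P Wpt M t))"
    proof
      assume "\<exists>M Y. (\<forall>p \<in> P. int (M p) = int (M0 p) + (\<Sum>t \<in> T. incidence Wpt Wtp p t * int (Y t))) \<and>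
          (\<forall>t \<in> T. \<not> enabled P Wpt M t)"
      then obtain M Y where eqY: "\<And>p. p \<in> P \<Longrightarrow> int (M p) = int (M0 p) + (\<Sum>t \<in> T. incidence Wpt Wtp p t * int (Y t))"
        and dl: "\<And>t. t \<in> T \<Longrightarrow> \<not> enabled P Wpt M t" by blast
      define Pr where "Pr = (\<lambda>(M1, X). rc P T Wpt Wtp M0 M1 X \<and> (\<forall>s. X s \<le> Y s))"
      define f where "f = (\<lambda>(M1::'p \<Rightarrow> nat, X::'t \<Rightarrow> nat). \<Sum>s\<in>T. X s)"
      have "Pr (M0, \<lambda>_. 0)" by (simp add: Pr_def rc0)
      moreover have "\<forall>y. Pr y \<longrightarrow> f y < (\<Sum>s\<in>T. Y s) + 1"
        by (auto simp: Pr_def f_def intro!: le_imp_less_Suc sum_mono)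
      ultimately have "\<exists>x. Pr x \<and> (\<forall>y. Pr y \<longrightarrow> f y \<le> f x)"
        by (rule ex_has_greatest_nat[of Pr "(M0, \<lambda>_. 0)" f "(\<Sum>s\<in>T. Y s) + 1"])
      then obtain x where x: "Pr x" "\<And>y. Pr y \<Longrightarrow> f y \<le> f x" by blast
      obtain M1 X where x_eq: "x = (M1, X)" by (cases x)
      have PrX: "Pr (M1, X)" and mx: "\<And>y. Pr y \<Longrightarrow> f y \<le> f (M1, X)" using x x_eq by auto
      have rcX: "rc P T Wpt Wtp M0 M1 X" and XY: "\<And>s. X s \<le> Y s" using PrX by (auto simp: Pr_def)
      have maxX: "\<not> enabled P Wpt M1 u" if "u \<in> T" "X u < Y u" for u
      proof
        assume en: "enabled P Wpt M1 u"
        have "Pr (fire Wpt Wtp M1 u, X(u := Suc (X u)))"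
          using rcS[OF rcX that(1) en] XY that(2) by (auto simp: Pr_def)
        then have "f (fire Wpt Wtp M1 u, X(u := Suc (X u))) \<le> f (M1, X)" by (rule mx)
        then show False using sum_upd_Suc_nat[OF finT that(1), of X] by (simp add: f_def)
      qed
      define D where "D = (\<lambda>s. Y s - X s)"
      have eqD: "int (M p) = int (M1 p) + int (\<Sum>v\<in>T. Wtp v p * D v) - int (\<Sum>v\<in>T. Wpt p v * D v)"
        if "p \<in> P" for p
      proof -
        have "int (M1 p) = int (M0 p) + (\<Sum>t \<in> T. incidence Wpt Wtp p t * int (X t))"
          using rc_eq[OF rcX finT that] .
        moreover have "(\<Sum>t \<in> T. incidence Wpt Wtp p t * int (Y t)) =
            (\<Sum>t \<in> T. incidence Wpt Wtp p t * int (X t)) + (\<Sum>t \<in> T. incidence Wpt Wtp p t * int (D t))"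
          by (simp add: D_def sum.distrib[symmetric] algebra_simps of_nat_diff XY)
        ultimately have "int (M p) = int (M1 p) + (\<Sum>t \<in> T. incidence Wpt Wtp p t * int (D t))"
          using eqY[OF that] by simp
        then show ?thesis using inc_split[of Wpt Wtp p D T] by simp
      qed
      show False
      proof (cases "\<forall>t\<in>T. \<not> enabled P Wpt M1 t")
        case True
        obtain t where t: "t \<in> T" using nt by (auto simp: nontrivial_def)
        obtain M'' where "reachable P T Wpt Wtp M1 M''" "enabled P Wpt M'' t"
          using live rc_reach[OF rcX] t unfolding live_def by blast
        then show False using reach_deadlock[OF _ True] True t by blast
      next
        case False
        then obtain t0 where t0: "t0 \<in> T" "enabled P Wpt M1 t0" by blast
        have Dt0: "D t0 = 0" using maxX[OF t0(1)] t0(2) by (force simp: D_def)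
        obtain p where p: "p \<in> P" "M p < Wpt p t0" using dl[OF t0(1)] by (auto simp: enabled_def)
        have M1p: "Wpt p t0 \<le> M1 p" using t0(2) p(1) by (simp add: enabled_def)
        have pQ: "p \<in> Q"
        proof (rule ccontr)
          assume "p \<notin> Q"
          have "(\<Sum>v\<in>T. Wpt p v * D v) = Wpt p t0 * D t0"
          proof (rule sum_single[OF finT t0(1)])
            fix v assume v: "v \<in> T" "v \<noteq> t0"
            have "Wpt p v = 0"
            proof (rule ccontr)
              assume "Wpt p v \<noteq> 0"
              then have "v = t0" using outp[of p v t0] p \<open>p \<notin> Q\<close> t0(1) v(1) by simp
              then show False using v(2) by simp
            qed
            then show "Wpt p v * D v = 0" by simp
          qed
          then have "(\<Sum>v\<in>T. Wpt p v * D v) = 0" using Dt0 by simp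
          then have "int (M p) = int (M1 p) + int (\<Sum>v\<in>T. Wtp v p * D v)"
            using eqD[OF p(1)] by (simp only: of_nat_0 diff_zero)
          then have "int (M p) \<ge> int (M1 p)" using of_nat_0_le_iff by linarith
          then show False using p(2) M1p by linarith
        qed
        obtain u0 where u0: "u0 \<in> T" "D u0 > 0"
        proof (rule ccontr)
          assume "\<not> thesis"
          then have z: "\<And>s. s \<in> T \<Longrightarrow> D s = 0" using that by blast
          have "(\<Sum>v\<in>T. Wpt p v * D v) = 0" "(\<Sum>v\<in>T. Wtp v p * D v) = 0"
            using z by (auto intro: sum.neutral)
          then have "int (M p) = int (M1 p)" using eqD[OF p(1)] by (simp only: of_nat_0 diff_zero add_0_right)
          then show False using p(2) M1p by linarith
        qed
        define U where "U = {u\<in>T. D u > 0}"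
        define \<beta> where "\<beta> = (\<lambda>u. SOME p'. p' \<in> P \<and> M1 p' < Wpt p' u)"
        have blk: "\<beta> u \<in> P \<and> M1 (\<beta> u) < Wpt (\<beta> u) u" if "u \<in> U" for u
        proof -
          have "\<not> enabled P Wpt M1 u" using maxX that by (auto simp: U_def D_def)
          then have "\<exists>p'. p' \<in> P \<and> M1 p' < Wpt p' u" by (auto simp: enabled_def not_le)
          then show ?thesis unfolding \<beta>_def by (rule someI_ex)
        qed
        have bQ: "\<beta> u \<in> P - Q" if "u \<in> U" for u
        proof (rule ccontr)
          assume nq: "\<beta> u \<notin> P - Q"
          have "\<beta> u \<in> Q" using nq blk[OF that] by blast
          then have "\<beta> u = p" using Quniq pQ by blast
          then have lt: "M1 p < Wpt p u" using blk[OF that] by simp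
          have uT: "u \<in> T" using that by (simp add: U_def)
          have o1: "u \<in> out_trans T Wpt p" using uT lt by (simp add: out_trans_def)
          have o2: "t0 \<in> out_trans T Wpt p" using t0(1) p(2) by (simp add: out_trans_def)
          have "Wpt p u = Wpt p t0"
            using hom p(1) o1 o2 unfolding homogeneous_def by blast
          then show False using lt M1p by simp
        qed
        have inpU: "v \<in> U" if "u \<in> U" "v \<in> T" "Wtp v (\<beta> u) > 0" for u v
        proof -
          define p' where "p' = \<beta> u"
          have p': "p' \<in> P - Q" "M1 p' < Wpt p' u" using bQ[OF that(1)] blk[OF that(1)] by (auto simp: p'_def)
          have uT: "u \<in> T" "D u > 0" using that(1) by (auto simp: U_def)
          have "(\<Sum>v\<in>T. Wpt p' v * D v) = Wpt p' u * D u"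
          proof (rule sum_single[OF finT uT(1)])
            fix v assume v: "v \<in> T" "v \<noteq> u"
            have "Wpt p' v = 0"
            proof (rule ccontr)
              assume "Wpt p' v \<noteq> 0"
              then have "v = u" using outp[of p' v u] p' uT(1) v(1) by simp
              then show False using v(2) by simp
            qed
            then show "Wpt p' v * D v = 0" by simp
          qed
          moreover have "Wpt p' u \<le> Wpt p' u * D u" using uT by simp
          moreover have "int (M p') = int (M1 p') + int (\<Sum>v\<in>T. Wtp v p' * D v) - int (\<Sum>v\<in>T. Wpt p' v * D v)"
            using eqD[of p'] p' by blast
          ultimately have "(\<Sum>v\<in>T. Wtp v p' * D v) > 0" using p'(2) by linarith
          then obtain s where s: "s \<in> T" "Wtp s p' * D s > 0"
          proof (cases "\<exists>s\<in>T. Wtp s p' * D s > 0")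
            case False
            then have "(\<Sum>v\<in>T. Wtp v p' * D v) = 0" by (intro sum.neutral) auto
            then show ?thesis using \<open>(\<Sum>v\<in>T. Wtp v p' * D v) > 0\<close> by simp
          qed blast
          have "s = v" using inp[of p' s v] p' s that(2,3) by (auto simp: p'_def)
          then show "v \<in> U" using s by (auto simp: U_def)
        qed
        have "\<not> live P T Wpt Wtp M0"
          by (rule dead_not_live[of U T u0 \<beta> P M1 Wpt Wtp]) (use u0 blk inpU rc_reach[OF rcX] in \<open>auto simp: U_def\<close>)
        then show False using live by simp
      qed
    qed
  next
    assume nodl: "\<not> (\<exists>M Y. (\<forall>p \<in> P. int (M p) = int (M0 p) + (\<Sum>t \<in> T. incidence Wpt Wtp p t * int (Y t))) \<and>
          (\<forall>t \<in> T. \<not> enabled P Wpt M t))"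
    show "live P T Wpt Wtp M0"
    proof (rule ccontr)
      assume "\<not> live P T Wpt Wtp M0"
      then obtain t M' where t: "t \<in> T" and r0: "reachable P T Wpt Wtp M0 M'"
        and dead: "\<forall>M''. reachable P T Wpt Wtp M' M'' \<longrightarrow> \<not> enabled P Wpt M'' t"
        unfolding live_def by blast
      obtain X0 where X0: "rc P T Wpt Wtp M0 M' X0" using reach_rc[OF r0] by blast
      have "\<forall>u\<in>T. \<exists>K. \<forall>M'' Z. rc P T Wpt Wtp M' M'' Z \<longrightarrow> Z u \<le> K"
      proof
        fix u assume u: "u \<in> T"
        have path: "(Inr t, Inr u) \<in> (net_arc (P - Q) T (del_Wpt Q Wpt) (del_Wtp Q Wtp))\<^sup>*"
          using sc_del t u unfolding strongly_connected_def Q_def by blast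
        show "\<exists>K. \<forall>M'' Z. rc P T Wpt Wtp M' M'' Z \<longrightarrow> Z u \<le> K"
          using bound_lemma[OF finT t path inp dead] by simp
      qed
      then obtain Kf where Kf: "\<And>u M'' Z. u \<in> T \<Longrightarrow> rc P T Wpt Wtp M' M'' Z \<Longrightarrow> Z u \<le> Kf u"
        by metis
      define Pr where "Pr = (\<lambda>(M2, Z). rc P T Wpt Wtp M' M2 Z)"
      define f where "f = (\<lambda>(M2::'p \<Rightarrow> nat, Z::'t \<Rightarrow> nat). \<Sum>s\<in>T. Z s)"
      have "Pr (M', \<lambda>_. 0)" by (simp add: Pr_def rc0)
      moreover have "\<forall>y. Pr y \<longrightarrow> f y < (\<Sum>s\<in>T. Kf s) + 1"
        by (auto simp: Pr_def f_def Kf intro!: le_imp_less_Suc sum_mono)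
      ultimately have "\<exists>x. Pr x \<and> (\<forall>y. Pr y \<longrightarrow> f y \<le> f x)"
        by (rule ex_has_greatest_nat[of Pr "(M', \<lambda>_. 0)" f "(\<Sum>s\<in>T. Kf s) + 1"])
      then obtain x where x: "Pr x" "\<And>y. Pr y \<Longrightarrow> f y \<le> f x" by blast
      obtain M2 Z where x_eq: "x = (M2, Z)" by (cases x)
      have PrZ: "Pr (M2, Z)" and mx: "\<And>y. Pr y \<Longrightarrow> f y \<le> f (M2, Z)" using x x_eq by auto
      have rcZ: "rc P T Wpt Wtp M' M2 Z" using PrZ by (simp add: Pr_def)
      have dl: "\<not> enabled P Wpt M2 u" if "u \<in> T" for u
      proof
        assume en: "enabled P Wpt M2 u"
        have "Pr (fire Wpt Wtp M2 u, Z(u := Suc (Z u)))"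
          using rcS[OF rcZ that en] by (simp add: Pr_def)
        then have "f (fire Wpt Wtp M2 u, Z(u := Suc (Z u))) \<le> f (M2, Z)" by (rule mx)
        then show False using sum_upd_Suc_nat[OF finT that, of Z] by (simp add: f_def)
      qed
      have "\<forall>p \<in> P. int (M2 p) = int (M0 p) + (\<Sum>t \<in> T. incidence Wpt Wtp p t * int (X0 t + Z t))"
      proof
        fix p assume p: "p \<in> P"
        show "int (M2 p) = int (M0 p) + (\<Sum>t \<in> T. incidence Wpt Wtp p t * int (X0 t + Z t))"
          using rc_eq[OF rcZ finT p] rc_eq[OF X0 finT p]
          by (simp add: sum.distrib algebra_simps)
      qed
      moreover have "\<forall>t\<in>T. \<not> enabled P Wpt M2 t" using dl by blast
      ultimately have "\<exists>M Y. (\<forall>p \<in> P. int (M p) = int (M0 p) + (\<Sum>t \<in> T. incidence Wpt Wtp p t * int (Y t))) \<and>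
          (\<forall>t \<in> T. \<not> enabled P Wpt M t)" by (intro exI[of _ M2] exI[of _ "\<lambda>t. X0 t + Z t"]) simp
      then show False using nodl by blast
    qed
  qed
qed

end
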